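(* Fix one of the ground state sequences (A) or (B) and $m\in\mathbb Z$. Let $b\in B_{\mathrm{aff}}$ satisfy $H(b\otimes b^\circ_m)\le0$. Then $G(b)\wedge|m\rangle=0$ in the Fock space $\mathcal F_{m-1}$ (i.e. the image in $\mathcal F_{m-1}$ of $G(b)\wedge\overline{|m\rangle}\in\bar{\mathcal F}_{m-1}$ vanishes; equivalently $G(b)\wedge\overline{|m\rangle}\in\bigcap_{n>0}q^nL(\bar{\mathcal F}_{m-1})$).
   Context: Let $\mathfrak g=\widehat{\mathfrak{sl}}_2$, $I=\{0,1\}$, weight lattice $P=\mathbb Z\Lambda_0\oplus\mathbb Z\Lambda_1\oplus\mathbb Z\delta$, coroots $h_0,h_1$ with $\langle h_i,\Lambda_j\rangle=\delta_{ij}$, $\langle h_i,\delta\rangle=0$, central element $c=h_0+h_1$. $U_q(\mathfrak g)$ is the quantum affine algebra over $\mathbb Q(q)$ with generators $e_i,f_i$ ($i\in I$), $q^h$ ($h\in P^*$), $t_i=q^{h_i}$, and coproduct $\Delta(q^h)=q^h\otimes q^h$, $\Delta(e_i)=e_i\otimes1+t_i^{-1}\otimes e_i$, $\Delta(f_i)=f_i\otimes t_i+1\otimes f_i$. $[n]=(q^n-q^{-n})/(q-q^{-1})$; $A\subset\mathbb Q(q)$ is the ring of rational functions regular at $q=0$. Let $J=\{0,1,2\}$. $V_{\mathrm{aff}}$ is the $\mathbb Q(q)$-space with basis $z^av_j$ ($a\in\mathbb Z$, $j\in J$), a $U_q(\mathfrak g)$-module via: $\mathrm{wt}(z^av_j)=2(1-j)(\Lambda_1-\Lambda_0)+a\delta$,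 $q^hz^av_j=q^{\langle h,\mathrm{wt}(z^av_j)\rangle}z^av_j$, $e_1z^av_j=[3-j]z^av_{j-1}$, $f_1z^av_j=[j+1]z^av_{j+1}$, $e_0z^av_j=[j+1]z^{a+1}v_{j+1}$, $f_0z^av_j=[3-j]z^{a-1}v_{j-1}$ (with $v_{-1}=v_3=0$). The operator $z^b$ sends $z^av_j\mapsto z^{a+b}v_j$. The crystal of $V_{\mathrm{aff}}$ is $B_{\mathrm{aff}}=\{z^ab_j\}$ with lower global base $G(z^ab_j)=z^av_j$; the energy function is $H(z^ab_i\otimes z^{a'}b_j)=\min\{i,2-j\}-a+a'$. $N\subset V_{\mathrm{aff}}\otimes V_{\mathrm{aff}}$ is the smallest subspace containing $v_0\otimes v_0$ that is stable under the action of $U_q(\mathfrak g)$ (via $\Delta$) and under the operators $z\otimes z$, $z^{-1}\otimes z^{-1}$, $z\otimes1+1\otimes z$. For $n\ge2$, $N_n=\sum_{r=0}^{n-2}V_{\mathrm{aff}}^{\otimes r}\otimes N\otimes V_{\mathrm{aff}}^{\otimes(n-r-2)}$, $\bigwedge^nV_{\mathrm{aff}}:=V_{\mathrm{aff}}^{\otimes n}/N_n$, and $L(\bigwedge^nV_{\mathrm{aff}})$ is the image of the $A$-lattice spanned by all $G(c_1)\otimes\cdots\otimes G(c_n)$, $c_r\in B_{\mathrm{aff}}$. Ground state sequences: (A) $b^\circ_m=zb_2$ for $m$ even, $b^\circ_m=b_0$ for $m$ odd; (B) $b^\circ_m=b_1$ for all $m$. Put $v^\circ_m=G(b^\circ_m)$.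 The pre-Fock space $\bar{\mathcal F}_m$ is the inductive limit of the spaces $\bigwedge^rV_{\mathrm{aff}}$ ($r\ge0$) along the maps $u\mapsto u\wedge v^\circ_{m+r}$; the image of $u\in\bigwedge^rV_{\mathrm{aff}}$ is written $u\wedge\overline{|m+r\rangle}$ (the formal semi-infinite wedge $u\wedge v^\circ_{m+r}\wedge v^\circ_{m+r+1}\wedge\cdots$), and $\overline{|m\rangle}$ is the image of $1\in\bigwedge^0V_{\mathrm{aff}}=\mathbb Q(q)$. $L(\bar{\mathcal F}_m)$ is the $A$-span of the images of the $L(\bigwedge^rV_{\mathrm{aff}})$. The Fock space is $\mathcal F_m=\bar{\mathcal F}_m/\bigcap_{n>0}q^nL(\bar{\mathcal F}_m)$, $|m\rangle$ is the image of $\overline{|m\rangle}$, $L(\mathcal F_m)$ is the image of $L(\bar{\mathcal F}_m)$, and $\mathcal F_m$ carries the $q$-adic topology with neighborhood basis of $0$ given by $\{q^nL(\mathcal F_m)\}_{n\ge0}$ (it is separated). *)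

theory Defs
  imports Main "HOL-Computational_Algebra.Polynomial" "HOL-Computational_Algebra.Fraction_Field"
begin

type_synonym K = "rat poly fract"

definition qq :: K where "qq = Fract [:0, 1:] 1"

definition Areg :: "K set" where
  "Areg = {x. \<exists>p r. x = Fract p r \<and> poly r 0 \<noteq> 0}"

definition qint :: "int \<Rightarrow> K" where
  "qint n = (qq powi n - qq powi (-n)) / (qq - inverse qq)"

text \<open>A basis element z^a v_j (or crystal element z^a b_j) is the pair (a,j), j in J={0,1,2}.
  A basis tensor G(c_1) (x) ... (x) G(c_n) is the list [c_1,...,c_n].
  A vector of V_aff^{(x)n} is its coefficient function on basis tensors.\<close>

type_synonym bas = "int \<times> nat"
type_synonym tens = "bas list \<Rightarrow> K"

definition valid :: "bas list \<Rightarrow> bool" where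
  "valid xs \<longleftrightarrow> (\<forall>x\<in>set xs. snd x \<le> 2)"

definition bt :: "bas list \<Rightarrow> tens" where
  "bt xs = (\<lambda>ys. if ys = xs then 1 else 0)"

definition tzero :: tens where "tzero = (\<lambda>_. 0)"
definition tadd :: "tens \<Rightarrow> tens \<Rightarrow> tens" where "tadd x y = (\<lambda>ys. x ys + y ys)"
definition tsub :: "tens \<Rightarrow> tens \<Rightarrow> tens" where "tsub x y = (\<lambda>ys. x ys - y ys)"
definition tscale :: "K \<Rightarrow> tens \<Rightarrow> tens" where "tscale c x = (\<lambda>ys. c * x ys)"

inductive_set span_over :: "K set \<Rightarrow> tens set \<Rightarrow> tens set" for R S where
  span_zero: "tzero \<in> span_over R S"
| span_base: "x \<in> S \<Longrightarrow> x \<in> span_over R S"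
| span_add: "x \<in> span_over R S \<Longrightarrow> y \<in> span_over R S \<Longrightarrow> tadd x y \<in> span_over R S"
| span_scale: "c \<in> R \<Longrightarrow> x \<in> span_over R S \<Longrightarrow> tscale c x \<in> span_over R S"

text \<open>Linear extension of a map given on basis tensors (all vectors used have finite support).\<close>
definition lin_ext :: "(bas list \<Rightarrow> tens) \<Rightarrow> tens \<Rightarrow> tens" where
  "lin_ext g x = (\<lambda>ys. \<Sum>zs\<in>{zs. x zs \<noteq> 0}. x zs * g zs ys)"

type_synonym vec1 = "bas \<Rightarrow> K"

definition d1 :: "bas \<Rightarrow> vec1" where "d1 b = (\<lambda>c. if c = b then 1 else 0)"
definition s1 :: "K \<Rightarrow> vec1 \<Rightarrow> vec1" where "s1 c v = (\<lambda>x. c * v x)"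

text \<open>h in P^* written as h = x0 h_0 + x1 h_1 + x2 d (coordinates dual to Lambda_0, Lambda_1, delta).\<close>
type_synonym coweight = "int \<times> int \<times> int"

text \<open>wt(z^a v_j) = 2(1-j)(Lambda_1 - Lambda_0) + a delta; pairing <h, wt>.\<close>
definition pair_wt :: "coweight \<Rightarrow> bas \<Rightarrow> int" where
  "pair_wt h b = (case h of (x0, x1, x2) \<Rightarrow> case b of (a, j) \<Rightarrow>
      x0 * (- 2 * (1 - int j)) + x1 * (2 * (1 - int j)) + x2 * a)"

definition hcor :: "nat \<Rightarrow> coweight" where
  "hcor i = (if i = 0 then (1, 0, 0) else (0, 1, 0))"

definition eV :: "nat \<Rightarrow> bas \<Rightarrow> vec1" where
  "eV i b = (case b of (a, j) \<Rightarrow>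
     if i = 1 then (if 1 \<le> j \<and> j \<le> 2 then s1 (qint (3 - int j)) (d1 (a, j - 1)) else (\<lambda>_. 0))
     else (if j < 2 then s1 (qint (int j + 1)) (d1 (a + 1, j + 1)) else (\<lambda>_. 0)))"

definition fV :: "nat \<Rightarrow> bas \<Rightarrow> vec1" where
  "fV i b = (case b of (a, j) \<Rightarrow>
     if i = 1 then (if j < 2 then s1 (qint (int j + 1)) (d1 (a, j + 1)) else (\<lambda>_. 0))
     else (if 1 \<le> j \<and> j \<le> 2 then s1 (qint (3 - int j)) (d1 (a - 1, j - 1)) else (\<lambda>_. 0)))"

definition tp2 :: "vec1 \<Rightarrow> vec1 \<Rightarrow> tens" where
  "tp2 u w = (\<lambda>ys. if length ys = 2 then u (ys ! 0) * w (ys ! 1) else 0)"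

text \<open>Delta(e_i) = e_i (x) 1 + t_i^{-1} (x) e_i\<close>
definition E2 :: "nat \<Rightarrow> bas list \<Rightarrow> tens" where
  "E2 i xs = (if length xs = 2 then
     tadd (tp2 (eV i (xs ! 0)) (d1 (xs ! 1)))
          (tscale (qq powi (- pair_wt (hcor i) (xs ! 0))) (tp2 (d1 (xs ! 0)) (eV i (xs ! 1))))
   else tzero)"

text \<open>Delta(f_i) = f_i (x) t_i + 1 (x) f_i\<close>
definition F2 :: "nat \<Rightarrow> bas list \<Rightarrow> tens" where
  "F2 i xs = (if length xs = 2 then
     tadd (tscale (qq powi (pair_wt (hcor i) (xs ! 1))) (tp2 (fV i (xs ! 0)) (d1 (xs ! 1))))
          (tp2 (d1 (xs ! 0)) (fV i (xs ! 1)))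
   else tzero)"

text \<open>Delta(q^h) = q^h (x) q^h\<close>
definition Q2 :: "coweight \<Rightarrow> bas list \<Rightarrow> tens" where
  "Q2 h xs = (if length xs = 2 then
     tscale (qq powi (pair_wt h (xs ! 0) + pair_wt h (xs ! 1))) (bt xs) else tzero)"

definition zz2 :: "int \<Rightarrow> bas list \<Rightarrow> tens" where
  "zz2 s xs = (if length xs = 2 then
     bt [(fst (xs ! 0) + s, snd (xs ! 0)), (fst (xs ! 1) + s, snd (xs ! 1))] else tzero)"

definition zsum2 :: "bas list \<Rightarrow> tens" where
  "zsum2 xs = (if length xs = 2 then
     tadd (bt [(fst (xs ! 0) + 1, snd (xs ! 0)), xs ! 1])
          (bt [xs ! 0, (fst (xs ! 1) + 1, snd (xs ! 1))]) else tzero)"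

text \<open>N: smallest subspace containing v_0 (x) v_0 stable under U_q(g) (generators e_i, f_i, q^h),
  z (x) z, z^{-1} (x) z^{-1} and z (x) 1 + 1 (x) z.\<close>
inductive_set Nsp :: "tens set" where
  N_gen: "bt [(0, 0), (0, 0)] \<in> Nsp"
| N_zero: "tzero \<in> Nsp"
| N_add: "x \<in> Nsp \<Longrightarrow> y \<in> Nsp \<Longrightarrow> tadd x y \<in> Nsp"
| N_scale: "x \<in> Nsp \<Longrightarrow> tscale c x \<in> Nsp"
| N_e: "i \<le> 1 \<Longrightarrow> x \<in> Nsp \<Longrightarrow> lin_ext (E2 i) x \<in> Nsp"
| N_f: "i \<le> 1 \<Longrightarrow> x \<in> Nsp \<Longrightarrow> lin_ext (F2 i) x \<in> Nsp"
| N_q: "x \<in> Nsp \<Longrightarrow> lin_ext (Q2 h) x \<in> Nsp"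
| N_z: "x \<in> Nsp \<Longrightarrow> lin_ext (zz2 1) x \<in> Nsp"
| N_zinv: "x \<in> Nsp \<Longrightarrow> lin_ext (zz2 (-1)) x \<in> Nsp"
| N_zsum: "x \<in> Nsp \<Longrightarrow> lin_ext zsum2 x \<in> Nsp"

text \<open>The vector G(x_1)(x)...(x)G(x_r) (x) u (x) G(y_1)(x)...(x)G(y_s) for u in V(x)V.\<close>
definition embed :: "bas list \<Rightarrow> tens \<Rightarrow> bas list \<Rightarrow> tens" where
  "embed xs u ys = (\<lambda>zs. if length zs = length xs + 2 + length ys \<and> take (length xs) zs = xs
       \<and> drop (length xs + 2) zs = ys then u (take 2 (drop (length xs) zs)) else 0)"

definition Nn :: "nat \<Rightarrow> tens set" where
  "Nn n = span_over UNIV {embed xs u ys | xs u ys. u \<in> Nsp \<and> valid xs \<and> valid ys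
                                \<and> length xs + 2 + length ys = n}"

definition Ltens :: "nat \<Rightarrow> tens set" where
  "Ltens n = span_over Areg {bt cs | cs. length cs = n \<and> valid cs}"

datatype gseq = GS_A | GS_B

definition bcirc :: "gseq \<Rightarrow> int \<Rightarrow> bas" where
  "bcirc g m = (case g of GS_A \<Rightarrow> (if even m then (1, 2) else (0, 0)) | GS_B \<Rightarrow> (0, 1))"

definition energy :: "bas \<Rightarrow> bas \<Rightarrow> int" where
  "energy b b' = (case b of (a, i) \<Rightarrow> case b' of (a', j) \<Rightarrow> int (min i (2 - j)) - a + a')"

text \<open>u (x) v_circ_{m+r} (x) ... (x) v_circ_{m+r+k-1}: the transition map of the inductive
  system defining the pre-Fock space bar F_m, from stage r to stage r+k, on representatives.\<close>
definition tappend :: "tens \<Rightarrow> bas \<Rightarrow> tens" where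
  "tappend u c = (\<lambda>zs. if zs \<noteq> [] \<and> last zs = c then u (butlast zs) else 0)"

fun push :: "gseq \<Rightarrow> int \<Rightarrow> nat \<Rightarrow> nat \<Rightarrow> tens \<Rightarrow> tens" where
  "push g m r 0 u = u"
| "push g m r (Suc k) u = tappend (push g m r k u) (bcirc g (m + int r + int k))"

text \<open>For u in V_aff^{(x)r}, the element (image of u) of the pre-Fock space bar F_m lies in
  q^n L(bar F_m), where L(bar F_m) is the A-span of the images of the L(wedge^{r_i} V_aff):
  i.e. there are finitely many u_i in the A-lattice of V_aff^{(x) r_i} and c_i in A such that the image of u
  equals q^n sum c_i (image of u_i); equality in the inductive limit of the quotients
  wedge^t = V^{(x)t}/N_t being tested at a common later stage t.\<close>
definition in_qL_Fbar :: "gseq \<Rightarrow> int \<Rightarrow> nat \<Rightarrow> nat \<Rightarrow> tens \<Rightarrow> bool" where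
  "in_qL_Fbar g m n r u \<longleftrightarrow>
     (\<exists>t cs. r \<le> t \<and> (\<forall>(ri, ui, ci)\<in>set cs. ri \<le> t \<and> ui \<in> Ltens ri \<and> ci \<in> Areg) \<and>
        tsub (push g m r (t - r) u)
             (tscale (qq ^ n) (foldr tadd (map (\<lambda>(ri, ui, ci). tscale ci (push g m ri (t - ri) ui)) cs) tzero))
          \<in> Nn t)"

end

theory Submission
  imports Defs
begin

section \<open>Scalars\<close>

lemma Fract_zero_iff1: "(Fract (p::rat poly) 1 = 0) \<longleftrightarrow> p = 0"
  by (simp add: Zero_fract_def eq_fract)

lemma qq_nz[simp]: "qq \<noteq> 0"
  unfolding qq_def by (simp add: Fract_zero_iff1)

lemma Fract_one_add: "Fract (p::rat poly) 1 + Fract r 1 = Fract (p + r) 1" by simp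
lemma Fract_one_mult: "Fract (p::rat poly) 1 * Fract r 1 = Fract (p * r) 1" by simp

lemma Areg_Fract1: "Fract p 1 \<in> Areg"
  unfolding Areg_def by (rule CollectI, rule exI[of _ p], rule exI[of _ 1]) simp

lemma Areg_0[simp]: "0 \<in> Areg" using Areg_Fract1[of 0] by (simp add: Zero_fract_def)
lemma Areg_1[simp]: "1 \<in> Areg" using Areg_Fract1[of 1] by (simp add: One_fract_def)
lemma Areg_qq[simp]: "qq \<in> Areg" unfolding qq_def by (rule Areg_Fract1)

lemma Areg_mult[simp]: "x \<in> Areg \<Longrightarrow> y \<in> Areg \<Longrightarrow> x * y \<in> Areg"
proof -
  assume "x \<in> Areg" "y \<in> Areg"
  then obtain p r p' r' where "x = Fract p r" "poly r 0 \<noteq> 0" "y = Fract p' r'" "poly r' 0 \<noteq> 0"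
    unfolding Areg_def by auto
  then show ?thesis unfolding Areg_def
    by (intro CollectI exI[of _ "p * p'"] exI[of _ "r * r'"]) simp
qed

lemma Areg_add[simp]: "x \<in> Areg \<Longrightarrow> y \<in> Areg \<Longrightarrow> x + y \<in> Areg"
proof -
  assume "x \<in> Areg" "y \<in> Areg"
  then obtain p r p' r' where "x = Fract p r" "poly r 0 \<noteq> 0" "y = Fract p' r'" "poly r' 0 \<noteq> 0"
    unfolding Areg_def by auto
  moreover have "r \<noteq> 0" "r' \<noteq> 0" using \<open>poly r 0 \<noteq> 0\<close> \<open>poly r' 0 \<noteq> 0\<close> by auto
  ultimately show ?thesis unfolding Areg_def
    by (intro CollectI exI[of _ "p * r' + p' * r"] exI[of _ "r * r'"]) simp
qed

lemma Areg_uminus[simp]: "x \<in> Areg \<Longrightarrow> - x \<in> Areg"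
proof -
  assume "x \<in> Areg"
  then obtain p r where "x = Fract p r" "poly r 0 \<noteq> 0" unfolding Areg_def by auto
  then show ?thesis unfolding Areg_def
    by (intro CollectI exI[of _ "- p"] exI[of _ "r"]) simp
qed

lemma Areg_diff[simp]: "x \<in> Areg \<Longrightarrow> y \<in> Areg \<Longrightarrow> x - y \<in> Areg"
  using Areg_add[of x "-y"] by simp

lemma Areg_pow[simp]: "x \<in> Areg \<Longrightarrow> x ^ n \<in> Areg"
  by (induction n) auto

lemma Areg_numeral[simp]: "numeral k \<in> Areg"
proof -
  have "numeral k = Fract (numeral k) 1"
    by (metis Fract_of_nat_eq of_nat_numeral)
  then show ?thesis using Areg_Fract1 by metis
qed


section \<open>Tensor algebra\<close>

lemmas tens_simps = tadd_def tsub_def tscale_def tzero_def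

definition fs :: "tens \<Rightarrow> bool" where "fs x \<longleftrightarrow> finite {zs. x zs \<noteq> 0}"

lemma fs_bt[simp]: "fs (bt xs)"
proof -
  have "{zs. bt xs zs \<noteq> 0} = {xs}" by (auto simp: bt_def)
  then show ?thesis by (simp add: fs_def)
qed

lemma fs_tzero[simp]: "fs tzero" by (simp add: fs_def tzero_def)

lemma fs_tadd[simp]: "fs x \<Longrightarrow> fs y \<Longrightarrow> fs (tadd x y)"
  unfolding fs_def tadd_def
  by (rule finite_subset[of _ "{zs. x zs \<noteq> 0} \<union> {zs. y zs \<noteq> 0}"]) auto

lemma fs_tscale[simp]: "fs x \<Longrightarrow> fs (tscale c x)"
  unfolding fs_def tscale_def
  by (rule finite_subset[of _ "{zs. x zs \<noteq> 0}"]) auto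

lemma fs_tsub[simp]: "fs x \<Longrightarrow> fs y \<Longrightarrow> fs (tsub x y)"
  unfolding fs_def tsub_def
  by (rule finite_subset[of _ "{zs. x zs \<noteq> 0} \<union> {zs. y zs \<noteq> 0}"]) auto

lemma lin_ext_on:
  assumes "finite U" "{zs. x zs \<noteq> 0} \<subseteq> U"
  shows "lin_ext g x ys = (\<Sum>zs\<in>U. x zs * g zs ys)"
  unfolding lin_ext_def
  by (rule sum.mono_neutral_left) (use assms in auto)

lemma lin_ext_bt[simp]: "lin_ext g (bt xs) = g xs"
proof
  fix ys
  have "lin_ext g (bt xs) ys = (\<Sum>zs\<in>{xs}. bt xs zs * g zs ys)"
    by (rule lin_ext_on) (auto simp: bt_def)
  then show "lin_ext g (bt xs) ys = g xs ys" by (simp add: bt_def)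
qed

lemma lin_ext_tzero[simp]: "lin_ext g tzero = tzero"
  by (simp add: lin_ext_def tzero_def)

lemma lin_ext_tadd:
  assumes "fs x" "fs y"
  shows "lin_ext g (tadd x y) = tadd (lin_ext g x) (lin_ext g y)"
proof
  fix ys
  let ?U = "{zs. x zs \<noteq> 0} \<union> {zs. y zs \<noteq> 0}"
  have fU: "finite ?U" using assms by (simp add: fs_def)
  have "lin_ext g (tadd x y) ys = (\<Sum>zs\<in>?U. tadd x y zs * g zs ys)"
    by (rule lin_ext_on[OF fU]) (auto simp: tadd_def)
  also have "\<dots> = (\<Sum>zs\<in>?U. x zs * g zs ys) + (\<Sum>zs\<in>?U. y zs * g zs ys)"
    by (simp add: tadd_def distrib_right sum.distrib)
  also have "(\<Sum>zs\<in>?U. x zs * g zs ys) = lin_ext g x ys"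
    by (rule lin_ext_on[OF fU, symmetric]) auto
  also have "(\<Sum>zs\<in>?U. y zs * g zs ys) = lin_ext g y ys"
    by (rule lin_ext_on[OF fU, symmetric]) auto
  finally show "lin_ext g (tadd x y) ys = tadd (lin_ext g x) (lin_ext g y) ys"
    by (simp add: tadd_def)
qed

lemma lin_ext_tscale:
  assumes "fs x"
  shows "lin_ext g (tscale c x) = tscale c (lin_ext g x)"
proof
  fix ys
  let ?U = "{zs. x zs \<noteq> 0}"
  have fU: "finite ?U" using assms by (simp add: fs_def)
  have "lin_ext g (tscale c x) ys = (\<Sum>zs\<in>?U. tscale c x zs * g zs ys)"
    by (rule lin_ext_on[OF fU]) (auto simp: tscale_def)
  also have "\<dots> = c * (\<Sum>zs\<in>?U. x zs * g zs ys)"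
    by (simp add: tscale_def sum_distrib_left mult.assoc)
  also have "(\<Sum>zs\<in>?U. x zs * g zs ys) = lin_ext g x ys"
    by (rule lin_ext_on[OF fU, symmetric]) auto
  finally show "lin_ext g (tscale c x) ys = tscale c (lin_ext g x) ys"
    by (simp add: tscale_def)
qed

lemma tsub_as_tadd: "tsub x y = tadd x (tscale (-1) y)"
  by (rule ext) (simp add: tens_simps)

lemma lin_ext_tsub:
  assumes "fs x" "fs y"
  shows "lin_ext g (tsub x y) = tsub (lin_ext g x) (lin_ext g y)"
  using assms by (simp add: tsub_as_tadd lin_ext_tadd lin_ext_tscale)

lemma ops_len2:
  assumes "length ys \<noteq> 2"
  shows "E2 i xs ys = 0" "F2 i xs ys = 0" "Q2 h xs ys = 0" "zz2 s xs ys = 0" "zsum2 xs ys = 0"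
  using assms
  by (auto simp: E2_def F2_def Q2_def zz2_def zsum2_def tp2_def tens_simps bt_def)

lemma lin_ext_len2:
  assumes "\<And>zs. g zs ys = 0"
  shows "lin_ext g x ys = 0"
  using assms by (simp add: lin_ext_def)

lemma Nsp_len2: "x \<in> Nsp \<Longrightarrow> length ys \<noteq> 2 \<Longrightarrow> x ys = 0"
proof (induction x rule: Nsp.induct)
  case N_gen then show ?case by (auto simp: bt_def)
qed (auto simp: tens_simps intro!: lin_ext_len2 ops_len2)

lemma embed_nil: "(\<And>ys. length ys \<noteq> 2 \<Longrightarrow> u ys = 0) \<Longrightarrow> embed [] u [] = u"
  by (rule ext) (auto simp: embed_def)

lemma Nn_zero[simp]: "tzero \<in> Nn t" unfolding Nn_def by (rule span_zero)
lemma Nn_add[simp]: "x \<in> Nn t \<Longrightarrow> y \<in> Nn t \<Longrightarrow> tadd x y \<in> Nn t"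
  unfolding Nn_def by (rule span_add)
lemma Nn_scale[simp]: "x \<in> Nn t \<Longrightarrow> tscale c x \<in> Nn t"
  unfolding Nn_def by (rule span_scale) auto
lemma Nn_sub[simp]: "x \<in> Nn t \<Longrightarrow> y \<in> Nn t \<Longrightarrow> tsub x y \<in> Nn t"
  by (simp add: tsub_as_tadd)

lemma Nsp_Nn2: "u \<in> Nsp \<Longrightarrow> u \<in> Nn 2"
proof -
  assume u: "u \<in> Nsp"
  have "embed [] u [] = u" by (rule embed_nil) (use Nsp_len2[OF u] in auto)
  moreover have "embed [] u [] \<in> Nn 2"
    unfolding Nn_def by (rule span_base) (use u in \<open>auto simp: valid_def\<close>)
  ultimately show ?thesis by simp
qed

lemma Lt_zero[simp]: "tzero \<in> Ltens t" unfolding Ltens_def by (rule span_zero)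
lemma Lt_add[simp]: "x \<in> Ltens t \<Longrightarrow> y \<in> Ltens t \<Longrightarrow> tadd x y \<in> Ltens t"
  unfolding Ltens_def by (rule span_add)
lemma Lt_scale[simp]: "c \<in> Areg \<Longrightarrow> x \<in> Ltens t \<Longrightarrow> tscale c x \<in> Ltens t"
  unfolding Ltens_def by (rule span_scale)
lemma Lt_bt: "length cs = t \<Longrightarrow> valid cs \<Longrightarrow> bt cs \<in> Ltens t"
  unfolding Ltens_def by (rule span_base) auto

lemma tappend_tadd: "tappend (tadd x y) c = tadd (tappend x c) (tappend y c)"
  by (rule ext) (simp add: tappend_def tens_simps)
lemma tappend_tscale: "tappend (tscale a x) c = tscale a (tappend x c)"
  by (rule ext) (simp add: tappend_def tens_simps)
lemma tappend_tsub: "tappend (tsub x y) c = tsub (tappend x c) (tappend y c)"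
  by (rule ext) (simp add: tappend_def tens_simps)
lemma tappend_tzero: "tappend tzero c = tzero"
  by (rule ext) (simp add: tappend_def tens_simps)

lemma snoc_iff: "(zs = xs @ [c]) \<longleftrightarrow> zs \<noteq> [] \<and> butlast zs = xs \<and> last zs = c"
  by (cases zs rule: rev_cases) auto

lemma tappend_bt: "tappend (bt xs) c = bt (xs @ [c])"
  by (rule ext) (auto simp: tappend_def bt_def snoc_iff)

lemma tappend_embed: "tappend (embed xs u ys) c = embed xs u (ys @ [c])"
proof
  fix zs
  show "tappend (embed xs u ys) c zs = embed xs u (ys @ [c]) zs"
  proof (cases zs rule: rev_cases)
    case Nil then show ?thesis by (simp add: tappend_def embed_def)
  next
    case (snoc zs' d)
    show ?thesis
    proof (cases "length zs' = length xs + 2 + length ys")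
      case True
      then show ?thesis using snoc by (auto simp: tappend_def embed_def)
    next
      case False
      then show ?thesis using snoc by (auto simp: tappend_def embed_def)
    qed
  qed
qed

lemma valid_app: "valid (xs @ ys) \<longleftrightarrow> valid xs \<and> valid ys" by (auto simp: valid_def)
lemma valid_cons: "valid (x # ys) \<longleftrightarrow> snd x \<le> 2 \<and> valid ys" by (auto simp: valid_def)
lemma valid_nil[simp]: "valid []" by (simp add: valid_def)

lemma Nn_tappend: "x \<in> Nn t \<Longrightarrow> snd c \<le> 2 \<Longrightarrow> tappend x c \<in> Nn (Suc t)"
  unfolding Nn_def
proof (induction x rule: span_over.induct)
  case span_zero then show ?case by (simp add: tappend_tzero span_over.span_zero)
next
  case (span_base x)
  then obtain xs u ys where "x = embed xs u ys" "u \<in> Nsp" "valid xs" "valid ys"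
    "length xs + 2 + length ys = t" by auto
  moreover have "valid (ys @ [c])" using \<open>valid ys\<close> span_base.prems by (simp add: valid_app valid_def)
  ultimately have "tappend x c = embed xs u (ys @ [c]) \<and> u \<in> Nsp \<and> valid xs \<and> valid (ys @ [c])
     \<and> length xs + 2 + length (ys @ [c]) = Suc t" by (simp add: tappend_embed)
  then show ?case by (intro span_over.span_base) blast
next
  case (span_add x y) then show ?case by (simp add: tappend_tadd span_over.span_add)
next
  case (span_scale c x) then show ?case by (simp add: tappend_tscale span_over.span_scale)
qed

lemma Lt_tappend: "x \<in> Ltens t \<Longrightarrow> snd c \<le> 2 \<Longrightarrow> tappend x c \<in> Ltens (Suc t)"
  unfolding Ltens_def
proof (induction x rule: span_over.induct)
  case span_zero then show ?case by (simp add: tappend_tzero span_over.span_zero)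
next
  case (span_base x)
  then obtain cs where "x = bt cs" "length cs = t" "valid cs" by auto
  then have "tappend x c = bt (cs @ [c]) \<and> length (cs @ [c]) = Suc t \<and> valid (cs @ [c])"
    using span_base.prems by (simp add: tappend_bt valid_app valid_def)
  then show ?case by (intro span_over.span_base) blast
next
  case (span_add x y) then show ?case by (simp add: tappend_tadd span_over.span_add)
next
  case (span_scale c x) then show ?case by (simp add: tappend_tscale span_over.span_scale)
qed

definition tprep :: "bas \<Rightarrow> tens \<Rightarrow> tens" where
  "tprep c x = (\<lambda>zs. if zs \<noteq> [] \<and> hd zs = c then x (tl zs) else 0)"

lemma tprep_tadd: "tprep c (tadd x y) = tadd (tprep c x) (tprep c y)"
  by (rule ext) (simp add: tprep_def tens_simps)
lemma tprep_tscale: "tprep c (tscale a x) = tscale a (tprep c x)"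
  by (rule ext) (simp add: tprep_def tens_simps)
lemma tprep_tsub: "tprep c (tsub x y) = tsub (tprep c x) (tprep c y)"
  by (rule ext) (simp add: tprep_def tens_simps)
lemma tprep_tzero: "tprep c tzero = tzero"
  by (rule ext) (simp add: tprep_def tens_simps)
lemma tprep_bt: "tprep c (bt xs) = bt (c # xs)"
proof
  fix zs show "tprep c (bt xs) zs = bt (c # xs) zs"
    by (cases zs) (auto simp: tprep_def bt_def)
qed

lemma tprep_embed: "tprep c (embed xs u ys) = embed (c # xs) u ys"
proof
  fix zs show "tprep c (embed xs u ys) zs = embed (c # xs) u ys zs"
    by (cases zs) (auto simp: tprep_def embed_def)
qed

lemma tappend_tprep: "tappend (tprep c x) d = tprep c (tappend x d)"
proof
  fix zs show "tappend (tprep c x) d zs = tprep c (tappend x d) zs"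
  proof (cases zs)
    case Nil then show ?thesis by (simp add: tappend_def tprep_def)
  next
    case (Cons e zs')
    then show ?thesis by (cases "zs' = []") (auto simp: tappend_def tprep_def)
  qed
qed

lemma Nn_tprep: "x \<in> Nn t \<Longrightarrow> snd c \<le> 2 \<Longrightarrow> tprep c x \<in> Nn (Suc t)"
  unfolding Nn_def
proof (induction x rule: span_over.induct)
  case span_zero then show ?case by (simp add: tprep_tzero span_over.span_zero)
next
  case (span_base x)
  then obtain xs u ys where "x = embed xs u ys" "u \<in> Nsp" "valid xs" "valid ys"
    "length xs + 2 + length ys = t" by auto
  moreover have "valid (c # xs)" using \<open>valid xs\<close> span_base.prems by (simp add: valid_cons)
  ultimately have "tprep c x = embed (c # xs) u ys \<and> u \<in> Nsp \<and> valid (c # xs) \<and> valid ys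
     \<and> length (c # xs) + 2 + length ys = Suc t" by (simp add: tprep_embed)
  then show ?case by (intro span_over.span_base) blast
next
  case (span_add x y) then show ?case by (simp add: tprep_tadd span_over.span_add)
next
  case (span_scale c x) then show ?case by (simp add: tprep_tscale span_over.span_scale)
qed

lemma Lt_tprep: "x \<in> Ltens t \<Longrightarrow> snd c \<le> 2 \<Longrightarrow> tprep c x \<in> Ltens (Suc t)"
  unfolding Ltens_def
proof (induction x rule: span_over.induct)
  case span_zero then show ?case by (simp add: tprep_tzero span_over.span_zero)
next
  case (span_base x)
  then obtain cs where "x = bt cs" "length cs = t" "valid cs" by auto
  then have "tprep c x = bt (c # cs) \<and> length (c # cs) = Suc t \<and> valid (c # cs)"
    using span_base.prems by (simp add: tprep_bt valid_cons)
  then show ?case by (intro span_over.span_base) blast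
next
  case (span_add x y) then show ?case by (simp add: tprep_tadd span_over.span_add)
next
  case (span_scale c x) then show ?case by (simp add: tprep_tscale span_over.span_scale)
qed

fun pushk :: "gseq \<Rightarrow> int \<Rightarrow> nat \<Rightarrow> tens \<Rightarrow> tens" where
  "pushk g s 0 u = u"
| "pushk g s (Suc k) u = tappend (pushk g s k u) (bcirc g (s + int k))"

lemma push_pushk: "push g m r k u = pushk g (m + int r) k u"
  by (induction k) (auto simp: add.assoc)

lemma pushk_add: "pushk g s (k + j) u = pushk g (s + int k) j (pushk g s k u)"
  by (induction j) (auto simp: add.assoc)

lemma pushk_shift: "pushk g s (Suc k) u = pushk g (s + 1) k (tappend u (bcirc g s))"
  using pushk_add[of g s 1 k u] by simp

lemma bcirc_valid[simp]: "snd (bcirc g s) \<le> 2"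
  by (cases g) (auto simp: bcirc_def)

lemma pushk_tadd: "pushk g s k (tadd x y) = tadd (pushk g s k x) (pushk g s k y)"
  by (induction k) (auto simp: tappend_tadd)
lemma pushk_tscale: "pushk g s k (tscale a x) = tscale a (pushk g s k x)"
  by (induction k) (auto simp: tappend_tscale)
lemma pushk_tsub: "pushk g s k (tsub x y) = tsub (pushk g s k x) (pushk g s k y)"
  by (induction k) (auto simp: tappend_tsub)
lemma pushk_tzero: "pushk g s k tzero = tzero"
  by (induction k) (auto simp: tappend_tzero)
lemma pushk_tprep: "pushk g s k (tprep c x) = tprep c (pushk g s k x)"
  by (induction k) (auto simp: tappend_tprep)

lemma Nn_pushk: "x \<in> Nn t \<Longrightarrow> pushk g s k x \<in> Nn (t + k)"
  by (induction k) (auto intro: Nn_tappend)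
lemma Lt_pushk: "x \<in> Ltens t \<Longrightarrow> pushk g s k x \<in> Ltens (t + k)"
  by (induction k) (auto intro: Lt_tappend)

section \<open>Smallness\<close>

definition sm :: "gseq \<Rightarrow> int \<Rightarrow> nat \<Rightarrow> tens \<Rightarrow> bool" where
  "sm g s r u \<longleftrightarrow> (\<forall>n. \<exists>k w. w \<in> Ltens (r + k) \<and> tsub (pushk g s k u) (tscale (qq ^ n) w) \<in> Nn (r + k))"

lemma sm_ext:
  assumes "w \<in> Ltens (r + k)" "tsub (pushk g s k u) (tscale (qq ^ n) w) \<in> Nn (r + k)"
  shows "\<exists>w'. w' \<in> Ltens (r + (k + j)) \<and> tsub (pushk g s (k + j) u) (tscale (qq ^ n) w') \<in> Nn (r + (k + j))"
proof (intro exI conjI)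
  show "pushk g (s + int k) j w \<in> Ltens (r + (k + j))"
    using Lt_pushk[OF assms(1)] by (simp add: add.assoc)
  have "pushk g (s + int k) j (tsub (pushk g s k u) (tscale (qq ^ n) w)) \<in> Nn (r + (k + j))"
    using Nn_pushk[OF assms(2)] by (simp add: add.assoc)
  then show "tsub (pushk g s (k + j) u) (tscale (qq ^ n) (pushk g (s + int k) j w)) \<in> Nn (r + (k + j))"
    by (simp add: pushk_add pushk_tsub pushk_tscale)
qed

lemma sm_tadd:
  assumes "sm g s r u" "sm g s r v"
  shows "sm g s r (tadd u v)"
  unfolding sm_def
proof
  fix n
  obtain k1 w1 where 1: "w1 \<in> Ltens (r + k1)" "tsub (pushk g s k1 u) (tscale (qq ^ n) w1) \<in> Nn (r + k1)"
    using assms(1) unfolding sm_def by blast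
  obtain k2 w2 where 2: "w2 \<in> Ltens (r + k2)" "tsub (pushk g s k2 v) (tscale (qq ^ n) w2) \<in> Nn (r + k2)"
    using assms(2) unfolding sm_def by blast
  define K where "K = max k1 k2"
  obtain w1' where h1b: "w1' \<in> Ltens (r + K)" "tsub (pushk g s K u) (tscale (qq ^ n) w1') \<in> Nn (r + K)"
    using sm_ext[OF 1, of "K - k1"] unfolding K_def by auto
  obtain w2' where h2b: "w2' \<in> Ltens (r + K)" "tsub (pushk g s K v) (tscale (qq ^ n) w2') \<in> Nn (r + K)"
    using sm_ext[OF 2, of "K - k2"] unfolding K_def by auto
  have "tsub (pushk g s K (tadd u v)) (tscale (qq ^ n) (tadd w1' w2')) =
      tadd (tsub (pushk g s K u) (tscale (qq ^ n) w1')) (tsub (pushk g s K v) (tscale (qq ^ n) w2'))"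
    unfolding pushk_tadd by (rule ext) (simp add: tens_simps algebra_simps)
  then show "\<exists>k w. w \<in> Ltens (r + k) \<and> tsub (pushk g s k (tadd u v)) (tscale (qq ^ n) w) \<in> Nn (r + k)"
    using h1b h2b by (intro exI[of _ K] exI[of _ "tadd w1' w2'"]) auto
qed

lemma sm_tscale:
  assumes "sm g s r u" "c \<in> Areg"
  shows "sm g s r (tscale c u)"
  unfolding sm_def
proof
  fix n
  obtain k w where 1: "w \<in> Ltens (r + k)" "tsub (pushk g s k u) (tscale (qq ^ n) w) \<in> Nn (r + k)"
    using assms(1) unfolding sm_def by blast
  have "tsub (pushk g s k (tscale c u)) (tscale (qq ^ n) (tscale c w)) =
      tscale c (tsub (pushk g s k u) (tscale (qq ^ n) w))"
    unfolding pushk_tscale by (rule ext) (simp add: tens_simps algebra_simps)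
  then show "\<exists>k w. w \<in> Ltens (r + k) \<and> tsub (pushk g s k (tscale c u)) (tscale (qq ^ n) w) \<in> Nn (r + k)"
    using 1 assms(2) by (intro exI[of _ k] exI[of _ "tscale c w"]) auto
qed

lemma Areg_m1[simp]: "-1 \<in> Areg" by simp

lemma sm_tsub: "sm g s r u \<Longrightarrow> sm g s r v \<Longrightarrow> sm g s r (tsub u v)"
  by (simp add: tsub_as_tadd sm_tadd sm_tscale)

lemma sm_Nn: "u \<in> Nn r \<Longrightarrow> sm g s r u"
  unfolding sm_def
proof
  fix n assume "u \<in> Nn r"
  moreover have "tsub (pushk g s 0 u) (tscale (qq ^ n) tzero) = u"
    by (rule ext) (simp add: tens_simps)
  ultimately show "\<exists>k w. w \<in> Ltens (r + k) \<and> tsub (pushk g s k u) (tscale (qq ^ n) w) \<in> Nn (r + k)"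
    by (intro exI[of _ 0] exI[of _ tzero]) auto
qed

lemma sm_cong: "tsub u v \<in> Nn r \<Longrightarrow> sm g s r v \<Longrightarrow> sm g s r u"
proof -
  assume "tsub u v \<in> Nn r" "sm g s r v"
  then have "sm g s r (tadd (tsub u v) v)" using sm_tadd sm_Nn by blast
  moreover have "tadd (tsub u v) v = u" by (rule ext) (simp add: tens_simps)
  ultimately show ?thesis by simp
qed

lemma sm_tzero[simp]: "sm g s r tzero" by (rule sm_Nn) simp

lemma sm_tprep:
  assumes "sm g s r u" "snd c \<le> 2"
  shows "sm g s (Suc r) (tprep c u)"
  unfolding sm_def
proof
  fix n
  obtain k w where 1: "w \<in> Ltens (r + k)" "tsub (pushk g s k u) (tscale (qq ^ n) w) \<in> Nn (r + k)"
    using assms(1) unfolding sm_def by blast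
  have "tsub (pushk g s k (tprep c u)) (tscale (qq ^ n) (tprep c w)) =
      tprep c (tsub (pushk g s k u) (tscale (qq ^ n) w))"
    by (simp add: pushk_tprep tprep_tsub tprep_tscale)
  then show "\<exists>k w. w \<in> Ltens (Suc r + k) \<and> tsub (pushk g s k (tprep c u)) (tscale (qq ^ n) w) \<in> Nn (Suc r + k)"
    using 1 assms(2) by (intro exI[of _ k] exI[of _ "tprep c w"]) (auto intro: Nn_tprep Lt_tprep)
qed

lemma sm_shift1:
  assumes "sm g (s + 1) (Suc r) (tappend u (bcirc g s))"
  shows "sm g s r u"
  unfolding sm_def
proof
  fix n
  obtain k w where 1: "w \<in> Ltens (Suc r + k)"
     "tsub (pushk g (s + 1) k (tappend u (bcirc g s))) (tscale (qq ^ n) w) \<in> Nn (Suc r + k)"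
    using assms(1) unfolding sm_def by blast
  have e: "pushk g s (Suc k) u = pushk g (s + 1) k (tappend u (bcirc g s))" by (rule pushk_shift)
  show "\<exists>k w. w \<in> Ltens (r + k) \<and> tsub (pushk g s k u) (tscale (qq ^ n) w) \<in> Nn (r + k)"
    using 1 by (intro exI[of _ "Suc k"] exI[of _ w]) (simp del: pushk.simps add: e)
qed

lemma sm_shift2:
  assumes "sm g s r u"
  shows "sm g (s + 1) (Suc r) (tappend u (bcirc g s))"
  unfolding sm_def
proof
  fix n
  obtain k w where 1: "w \<in> Ltens (r + k)" "tsub (pushk g s k u) (tscale (qq ^ n) w) \<in> Nn (r + k)"
    using assms(1) unfolding sm_def by blast
  obtain w' where 2: "w' \<in> Ltens (r + (k + 1))" "tsub (pushk g s (k + 1) u) (tscale (qq ^ n) w') \<in> Nn (r + (k + 1))"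
    using sm_ext[OF 1, of 1] by blast
  have e: "pushk g s (k + 1) u = pushk g (s + 1) k (tappend u (bcirc g s))" using pushk_shift by simp
  show "\<exists>k w. w \<in> Ltens (Suc r + k) \<and> tsub (pushk g (s + 1) k (tappend u (bcirc g s))) (tscale (qq ^ n) w) \<in> Nn (Suc r + k)"
    using 2 by (intro exI[of _ k] exI[of _ w']) (simp del: pushk.simps add: e[symmetric])
qed

section \<open>Telescoping\<close>

definition tprepl :: "bas list \<Rightarrow> tens \<Rightarrow> tens" where
  "tprepl xs u = foldr tprep xs u"

lemma tprepl_bt: "tprepl xs (bt ys) = bt (xs @ ys)"
  by (induction xs) (auto simp: tprepl_def tprep_bt)
lemma tprepl_tsub: "tprepl xs (tsub u v) = tsub (tprepl xs u) (tprepl xs v)"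
  by (induction xs) (auto simp: tprepl_def tprep_tsub)
lemma tprepl_tscale: "tprepl xs (tscale c u) = tscale c (tprepl xs u)"
  by (induction xs) (auto simp: tprepl_def tprep_tscale)

lemma sm_tprepl: "sm g s r u \<Longrightarrow> valid xs \<Longrightarrow> sm g s (length xs + r) (tprepl xs u)"
  by (induction xs) (auto simp: tprepl_def valid_cons intro: sm_tprep)

lemma two_step:
  assumes H: "\<And>s'. sm g (s' + 1) 2 (tsub (bt [y, bcirc g s']) (tscale (cf s') (bt [bcirc g s', y])))"
    and cfA: "\<And>s'. cf s' \<in> Areg" and prod: "\<And>s'. cf s' * cf (s' + 1) = qq ^ 4"
  shows "sm g (s + 2) 3 (tsub (bt [y, bcirc g s, bcirc g (s + 1)]) (tscale (qq ^ 4) (bt [bcirc g s, bcirc g (s + 1), y])))"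
proof -
  let ?v = "bcirc g s" and ?w = "bcirc g (s + 1)"
  let ?S1 = "tsub (bt [y, ?v]) (tscale (cf s) (bt [?v, y]))"
  let ?S2 = "tsub (bt [y, ?w]) (tscale (cf (s + 1)) (bt [?w, y]))"
  have a: "sm g (s + 2) 3 (tappend ?S1 ?w)"
    using sm_shift2[OF H[of s], of ] by (simp add: add.assoc numeral_3_eq_3)
  have b: "sm g (s + 2) 3 (tscale (cf s) (tprep ?v ?S2))"
    using sm_tscale[OF sm_tprep[OF H[of "s + 1"]] cfA] by (simp add: add.assoc numeral_3_eq_3)
  have e: "tadd (tappend ?S1 ?w) (tscale (cf s) (tprep ?v ?S2)) =
     tsub (bt [y, ?v, ?w]) (tscale (qq ^ 4) (bt [?v, ?w, y]))"
    unfolding tappend_tsub tappend_tscale tappend_bt tprep_tsub tprep_tscale tprep_bt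
    by (rule ext) (simp add: tens_simps right_diff_distrib mult.assoc[symmetric] prod)
  show ?thesis using sm_tadd[OF a b] unfolding e .
qed

definition Pl :: "gseq \<Rightarrow> int \<Rightarrow> nat \<Rightarrow> bas list" where
  "Pl g s k = map (\<lambda>i. bcirc g (s + int i)) [0..<k]"

lemma Pl_len[simp]: "length (Pl g s k) = k" by (simp add: Pl_def)
lemma Pl_valid: "valid (Pl g s k)" by (auto simp: Pl_def valid_def)
lemma Pl_Suc: "Pl g s (Suc k) = Pl g s k @ [bcirc g (s + int k)]" by (simp add: Pl_def)

lemma telescope:
  assumes H: "\<And>s'. sm g (s' + 1) 2 (tsub (bt [y, bcirc g s']) (tscale (cf s') (bt [bcirc g s', y])))"
    and cfA: "\<And>s'. cf s' \<in> Areg" and prod: "\<And>s'. cf s' * cf (s' + 1) = qq ^ 4"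
    and vy: "snd y \<le> 2"
  shows "sm g s 1 (bt [y])"
proof -
  define X where "X j = tsub (pushk g s (2 * j) (bt [y])) (tscale (qq ^ (4 * j)) (bt (Pl g s (2 * j) @ [y])))" for j
  have IX: "sm g (s + int (2 * j)) (1 + 2 * j) (X j)" for j
  proof (induction j)
    case 0
    have "X 0 = tzero" unfolding X_def by (rule ext) (simp add: tens_simps Pl_def)
    then show ?case by simp
  next
    case (Suc j)
    let ?a = "s + int (2 * j)"
    have a: "sm g (?a + 2) (3 + 2 * j) (tappend (tappend (X j) (bcirc g ?a)) (bcirc g (?a + 1)))"
      using sm_shift2[OF sm_shift2[OF Suc.IH]] by (simp add: add.assoc numeral_3_eq_3)
    have b0: "sm g (?a + 2) 3 (tsub (bt [y, bcirc g ?a, bcirc g (?a + 1)]) (tscale (qq ^ 4) (bt [bcirc g ?a, bcirc g (?a + 1), y])))"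
      by (rule two_step[OF H cfA prod])
    have b: "sm g (?a + 2) (3 + 2 * j) (tscale (qq ^ (4 * j)) (tprepl (Pl g s (2 * j))
         (tsub (bt [y, bcirc g ?a, bcirc g (?a + 1)]) (tscale (qq ^ 4) (bt [bcirc g ?a, bcirc g (?a + 1), y])))))"
      using sm_tscale[OF sm_tprepl[OF b0 Pl_valid[of g s "2 * j"]], of "qq ^ (4 * j)"] by (simp add: add.commute)
    have P2: "Pl g s (2 * Suc j) = Pl g s (2 * j) @ [bcirc g ?a, bcirc g (?a + 1)]"
      by (simp add: Pl_Suc algebra_simps)
    have pk: "pushk g s (2 * Suc j) (bt [y]) = tappend (tappend (pushk g s (2 * j) (bt [y])) (bcirc g ?a)) (bcirc g (?a + 1))"
    proof -
      have "s + int (Suc (2 * j)) = ?a + 1" by simp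
      then show ?thesis by (simp add: ac_simps)
    qed
    have e: "tadd (tappend (tappend (X j) (bcirc g ?a)) (bcirc g (?a + 1)))
        (tscale (qq ^ (4 * j)) (tprepl (Pl g s (2 * j))
         (tsub (bt [y, bcirc g ?a, bcirc g (?a + 1)]) (tscale (qq ^ 4) (bt [bcirc g ?a, bcirc g (?a + 1), y]))))) = X (Suc j)"
      unfolding X_def P2 pk tappend_tsub tappend_tscale tappend_bt tprepl_tsub tprepl_tscale tprepl_bt
      by (rule ext) (simp add: tens_simps right_diff_distrib power_add)
    have "?a + 2 = s + int (2 * Suc j)" by simp
    moreover have "3 + 2 * j = 1 + 2 * Suc j" by simp
    ultimately show ?case using sm_tadd[OF a b] unfolding e by (simp add: ac_simps numeral_3_eq_3)
  qed
  show ?thesis unfolding sm_def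
  proof
    fix n
    obtain k w where kw: "w \<in> Ltens (1 + 2 * n + k)"
        "tsub (pushk g (s + int (2 * n)) k (X n)) (tscale (qq ^ n) w) \<in> Nn (1 + 2 * n + k)"
      using IX[of n] unfolding sm_def by blast
    let ?B = "pushk g (s + int (2 * n)) k (bt (Pl g s (2 * n) @ [y]))"
    have "bt (Pl g s (2 * n) @ [y]) \<in> Ltens (1 + 2 * n)"
      by (rule Lt_bt) (use Pl_valid[of g s "2 * n"] vy in \<open>auto simp: valid_app valid_def\<close>)
    then have B: "?B \<in> Ltens (1 + 2 * n + k)" by (rule Lt_pushk)
    have w2: "tadd w (tscale (qq ^ (3 * n)) ?B) \<in> Ltens (1 + 2 * n + k)"
      using kw(1) B by simp
    have e: "tsub (pushk g (s + int (2 * n)) k (X n)) (tscale (qq ^ n) w) =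
       tsub (pushk g s (2 * n + k) (bt [y])) (tscale (qq ^ n) (tadd w (tscale (qq ^ (3 * n)) ?B)))"
      unfolding X_def pushk_tsub pushk_tscale pushk_add
      by (rule ext) (simp add: tens_simps algebra_simps power_add[symmetric])
    show "\<exists>k w. w \<in> Ltens (1 + k) \<and> tsub (pushk g s k (bt [y])) (tscale (qq ^ n) w) \<in> Nn (1 + k)"
      using kw(2) w2 unfolding e by (intro exI[of _ "2 * n + k"] exI) (simp add: add.assoc)
  qed
qed

definition zsh :: "bas \<Rightarrow> bas" where "zsh b = (fst b + 1, snd b)"

definition Lower :: "(bas \<Rightarrow> bool) \<Rightarrow> tens set" where
  "Lower P = span_over Areg {bt [x, y'] | x y'. snd x \<le> 2 \<and> P y'}"

lemma Lower_base: "snd x \<le> 2 \<Longrightarrow> P y' \<Longrightarrow> bt [x, y'] \<in> Lower P"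
  unfolding Lower_def by (rule span_base) blast
lemma Lower_zero[simp]: "tzero \<in> Lower P"
  unfolding Lower_def by (rule span_zero)
lemma Lower_add: "x \<in> Lower P \<Longrightarrow> y \<in> Lower P \<Longrightarrow> tadd x y \<in> Lower P"
  unfolding Lower_def by (rule span_add)
lemma Lower_scale: "c \<in> Areg \<Longrightarrow> x \<in> Lower P \<Longrightarrow> tscale c x \<in> Lower P"
  unfolding Lower_def by (rule span_scale)
lemma Lower_sub: "x \<in> Lower P \<Longrightarrow> y \<in> Lower P \<Longrightarrow> tsub x y \<in> Lower P"
  unfolding tsub_as_tadd by (intro Lower_add Lower_scale) auto

lemma Lower_fs: "l \<in> Lower P \<Longrightarrow> fs l"
  unfolding Lower_def by (induction l rule: span_over.induct) auto

lemma Lower_sm: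
  assumes "l \<in> Lower P" "\<And>y'. P y' \<Longrightarrow> sm g s 1 (bt [y'])"
  shows "sm g s 2 l"
  using assms(1) unfolding Lower_def
proof (induction l rule: span_over.induct)
  case (span_base x)
  then obtain a y' where "x = bt [a, y']" "snd a \<le> 2" "P y'" by auto
  then show ?case using sm_tprep[OF assms(2)[of y'], of a] by (simp add: tprep_bt numeral_2_eq_2)
qed (auto intro: sm_tadd sm_tscale)

lemma zsum2_pair: "zsum2 [a, b] = tadd (bt [zsh a, b]) (bt [a, zsh b])"
  by (simp add: zsum2_def zsh_def)

lemma Lower_Z:
  assumes "l \<in> Lower P" "\<And>y'. P y' \<Longrightarrow> Q y' \<and> Q (zsh y')"
  shows "lin_ext zsum2 l \<in> Lower Q"
  using assms(1) unfolding Lower_def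
proof (induction l rule: span_over.induct)
  case span_zero then show ?case by (simp add: span_over.span_zero)
next
  case (span_base x)
  then obtain a y' where x: "x = bt [a, y']" "snd a \<le> 2" "P y'" by auto
  have "tadd (bt [zsh a, y']) (bt [a, zsh y']) \<in> Lower Q"
    using x assms(2)[of y'] by (intro Lower_add Lower_base) (auto simp: zsh_def)
  then show ?case using x by (simp add: zsum2_pair Lower_def)
next
  case (span_add x y)
  have "fs x" "fs y" using span_add.hyps(1,2) Lower_fs unfolding Lower_def by auto
  then show ?case using span_add by (simp add: lin_ext_tadd span_over.span_add)
next
  case (span_scale c x)
  have "fs x" using span_scale.hyps Lower_fs unfolding Lower_def by auto
  then show ?case using span_scale by (simp add: lin_ext_tscale span_over.span_scale)
qed

definition Step :: "gseq \<Rightarrow> int \<Rightarrow> bas \<Rightarrow> K \<Rightarrow> (bas \<Rightarrow> bool) \<Rightarrow> bool" where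
  "Step g s y c P \<longleftrightarrow> (\<exists>l\<in>Lower P. tsub (tsub (bt [y, bcirc g s]) (tscale c (bt [bcirc g s, y]))) l \<in> Nsp)"

lemma Step_sm:
  assumes "Step g s y c P" "\<And>y'. P y' \<Longrightarrow> sm g (s + 1) 1 (bt [y'])"
  shows "sm g (s + 1) 2 (tsub (bt [y, bcirc g s]) (tscale c (bt [bcirc g s, y])))"
proof -
  obtain l where l: "l \<in> Lower P" "tsub (tsub (bt [y, bcirc g s]) (tscale c (bt [bcirc g s, y]))) l \<in> Nsp"
    using assms(1) unfolding Step_def by blast
  show ?thesis by (rule sm_cong[OF Nsp_Nn2[OF l(2)] Lower_sm[OF l(1) assms(2)]])
qed

lemma Step_Z:
  assumes st: "Step g s y0 c P" and c: "c \<in> Areg" and vy: "snd y0 \<le> 2"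
    and Q1: "Q y0" and Q2: "Q (zsh (bcirc g s))" and PQ: "\<And>y'. P y' \<Longrightarrow> Q y' \<and> Q (zsh y')"
  shows "Step g s (zsh y0) c Q"
proof -
  let ?v = "bcirc g s"
  obtain l where l: "l \<in> Lower P" "tsub (tsub (bt [y0, ?v]) (tscale c (bt [?v, y0]))) l \<in> Nsp"
    using st unfolding Step_def by blast
  have fl: "fs l" by (rule Lower_fs[OF l(1)])
  have N: "lin_ext zsum2 (tsub (tsub (bt [y0, ?v]) (tscale c (bt [?v, y0]))) l) \<in> Nsp"
    by (rule N_zsum[OF l(2)])
  define l' where "l' = tadd (tsub (lin_ext zsum2 l) (bt [y0, zsh ?v])) (tscale c (bt [zsh ?v, y0]))"
  have l': "l' \<in> Lower Q" unfolding l'_def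
    using Lower_Z[of l P Q, OF l(1) PQ] Q1 Q2 vy c
    by (intro Lower_add Lower_sub Lower_scale Lower_base) (auto simp: zsh_def)
  have "lin_ext zsum2 (tsub (tsub (bt [y0, ?v]) (tscale c (bt [?v, y0]))) l) =
     tsub (tsub (bt [zsh y0, ?v]) (tscale c (bt [?v, zsh y0]))) l'"
    unfolding l'_def using fl
    by (simp add: lin_ext_tsub lin_ext_tscale zsum2_pair) (rule ext, simp add: tens_simps algebra_simps)
  then show ?thesis using N l' unfolding Step_def by auto
qed

section \<open>Concrete computations\<close>

lemma qq_pow: "qq ^ k = Fract (monom 1 k) 1"
proof (induction k)
  case 0 then show ?case by (simp add: One_fract_def monom_0 one_pCons)
next
  case (Suc k)
  have "qq ^ Suc k = Fract [:0, 1:] 1 * Fract (monom 1 k) 1" using Suc by (simp add: qq_def)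
  also have "\<dots> = Fract (monom 1 (Suc k)) 1" by (simp add: monom_Suc)
  finally show ?case .
qed

lemma qq_pow_ne: "qq ^ k + 1 \<noteq> 0"
proof -
  have "qq ^ k + 1 = Fract (monom 1 k + 1) 1" by (simp add: qq_pow One_fract_def)
  moreover have "monom (1::rat) k + 1 \<noteq> 0"
  proof
    assume "monom (1::rat) k + 1 = 0"
    then have "coeff (monom (1::rat) k + 1) k = 0" by simp
    then show False by (cases k) (auto simp: coeff_monom monom_0)
  qed
  ultimately show ?thesis by (simp add: Fract_zero_iff1)
qed

lemma qq2_ne1: "qq ^ 2 \<noteq> 1"
proof
  assume "qq ^ 2 = 1"
  then have "Fract (monom (1::rat) 2) 1 = Fract 1 1" by (simp add: qq_pow One_fract_def)
  then have "monom (1::rat) 2 = 1" by (simp add: eq_fract)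
  then have "coeff (monom (1::rat) 2) 0 = coeff 1 0" by simp
  then show False by (simp add: coeff_monom)
qed

lemma qq_minus_inv_ne: "qq - inverse qq \<noteq> 0"
proof
  assume "qq - inverse qq = 0"
  then have "qq * qq = 1" by (simp add: field_simps)
  then show False using qq2_ne1 by (simp add: power2_eq_square)
qed

lemma qint1: "qint 1 = 1" using qq_minus_inv_ne by (simp add: qint_def power_int_minus)
lemma qint2: "qint 2 = qq + inverse qq"
  using qq_minus_inv_ne qq2_ne1 by (simp add: qint_def power_int_minus field_simps power2_eq_square)
lemma qint3: "qint 3 = qq ^ 2 + 1 + inverse (qq ^ 2)"
proof -
  have "(qq ^ 2 + 1 + inverse (qq ^ 2)) * (qq - inverse qq) = qq ^ 3 - inverse (qq ^ 3)"
    by (simp add: field_simps) algebra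
  then show ?thesis using qq_minus_inv_ne
    by (simp add: qint_def power_int_minus field_simps)
qed

lemma len2_eq: "(ys = [b, b']) \<longleftrightarrow> length ys = 2 \<and> ys ! 0 = b \<and> ys ! 1 = b'"
  by (cases ys; cases "tl ys"; auto)

lemma tp2_s1_d1: "tp2 (s1 c (d1 b)) (d1 b') = tscale c (bt [b, b'])"
  by (rule ext) (auto simp: tp2_def s1_def d1_def bt_def tscale_def len2_eq)
lemma tp2_d1_s1: "tp2 (d1 b) (s1 c (d1 b')) = tscale c (bt [b, b'])"
  by (rule ext) (auto simp: tp2_def s1_def d1_def bt_def tscale_def len2_eq)
lemma tp2_z1: "tp2 (\<lambda>_. 0) w = tzero"
  by (rule ext) (auto simp: tp2_def tzero_def)
lemma tp2_z2: "tp2 u (\<lambda>_. 0) = tzero"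
  by (rule ext) (auto simp: tp2_def tzero_def)

lemma F2_pair: "F2 i [b1, b2] = tadd (tscale (qq powi pair_wt (hcor i) b2) (tp2 (fV i b1) (d1 b2))) (tp2 (d1 b1) (fV i b2))"
  by (simp add: F2_def)
lemma E2_pair: "E2 i [b1, b2] = tadd (tp2 (eV i b1) (d1 b2)) (tscale (qq powi (- pair_wt (hcor i) b1)) (tp2 (d1 b1) (eV i b2)))"
  by (simp add: E2_def)
lemma zz2_pair: "zz2 s [b1, b2] = bt [(fst b1 + s, snd b1), (fst b2 + s, snd b2)]"
  by (simp add: zz2_def)

lemmas calc_simps = F2_pair E2_pair zz2_pair zsum2_pair zsh_def fV_def eV_def pair_wt_def hcor_def
  tp2_s1_d1 tp2_d1_s1 tp2_z1 tp2_z2 qint1 qint2 qint3 lin_ext_tadd lin_ext_tscale lin_ext_tsub power_int_minus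

lemma w0N: "bt [(0,0),(0,0)] \<in> Nsp" by (rule N_gen)

definition w1 :: tens where "w1 = tadd (bt [(0,0),(0,1)]) (tscale (qq ^ 2) (bt [(0,1),(0,0)]))"

lemma w1N: "w1 \<in> Nsp"
proof -
  have "lin_ext (F2 1) (bt [(0,0),(0,0)]) \<in> Nsp" by (rule N_f) (auto intro: w0N)
  moreover have "lin_ext (F2 1) (bt [(0,0),(0,0)]) = w1"
    unfolding w1_def by (simp add: calc_simps) (rule ext, simp add: tens_simps)
  ultimately show ?thesis by simp
qed


lemma qint2_ne: "qint 2 \<noteq> 0"
proof
  assume "qint 2 = 0"
  moreover have "qint 2 * qq = qq ^ 2 + 1" by (simp add: qint2 field_simps; algebra)
  ultimately have "qq ^ 2 + 1 = 0" by simp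
  then show False using qq_pow_ne[of 2] by simp
qed

lemma poly3_ne: "qq ^ 4 + qq ^ 2 + 1 \<noteq> 0"
proof -
  have "qq ^ 4 + qq ^ 2 + 1 = Fract (monom 1 4 + monom 1 2 + 1) 1" by (simp add: qq_pow One_fract_def)
  moreover have "monom (1::rat) 4 + monom 1 2 + 1 \<noteq> 0"
  proof
    assume "monom (1::rat) 4 + monom 1 2 + 1 = 0"
    then have "coeff (monom (1::rat) 4 + monom 1 2 + 1) 0 = 0" by simp
    then show False by (simp add: coeff_monom)
  qed
  ultimately show ?thesis by (simp add: Fract_zero_iff1)
qed

lemma qint3_ne: "qint 3 \<noteq> 0"
proof
  assume "qint 3 = 0"
  moreover have "qint 3 * qq ^ 2 = qq ^ 4 + qq ^ 2 + 1" by (simp add: qint3 field_simps; algebra)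
  ultimately have "qq ^ 4 + qq ^ 2 + 1 = 0" by simp
  then show False using poly3_ne by simp
qed

lemma c4_ne: "qint 2 * (qq ^ 2 + inverse (qq ^ 2)) \<noteq> 0"
proof
  assume "qint 2 * (qq ^ 2 + inverse (qq ^ 2)) = 0"
  then have "qq ^ 2 + inverse (qq ^ 2) = 0" using qint2_ne by simp
  moreover have "(qq ^ 2 + inverse (qq ^ 2)) * qq ^ 2 = qq ^ 4 + 1" by (simp add: field_simps; algebra)
  ultimately have "qq ^ 4 + 1 = 0" by simp
  then show False using qq_pow_ne[of 4] by simp
qed

lemma Nsp_unscale: "tscale c x \<in> Nsp \<Longrightarrow> c \<noteq> 0 \<Longrightarrow> x \<in> Nsp"
proof -
  assume a: "tscale c x \<in> Nsp" "c \<noteq> 0"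
  from a(1) have "tscale (inverse c) (tscale c x) \<in> Nsp" by (rule N_scale)
  moreover have "tscale (inverse c) (tscale c x) = x" using \<open>c \<noteq> 0\<close> by (rule_tac ext) (simp add: tens_simps)
  ultimately show ?thesis by simp
qed

definition w2n :: tens where
  "w2n = tadd (bt [(0,0),(0,2)]) (tadd (tscale qq (bt [(0,1),(0,1)])) (tscale (qq ^ 4) (bt [(0,2),(0,0)])))"

lemma w2N: "w2n \<in> Nsp"
proof -
  have "lin_ext (F2 1) w1 \<in> Nsp" by (rule N_f) (auto intro: w1N)
  moreover have "lin_ext (F2 1) w1 = tscale (qint 2) w2n"
    unfolding w1_def w2n_def by (simp add: calc_simps) (rule ext, auto simp: tens_simps bt_def field_simps; algebra)
  ultimately show ?thesis using qint2_ne by (auto intro: Nsp_unscale)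
qed


definition w3n :: tens where
  "w3n = tadd (bt [(0,1),(0,2)]) (tscale (qq ^ 2) (bt [(0,2),(0,1)]))"

lemma w3N: "w3n \<in> Nsp"
proof -
  have "lin_ext (F2 1) w2n \<in> Nsp" by (rule N_f) (auto intro: w2N)
  moreover have "lin_ext (F2 1) w2n = tscale (qint 3) w3n"
    unfolding w2n_def w3n_def by (simp add: calc_simps) (rule ext, auto simp: tens_simps bt_def field_simps; algebra)
  ultimately show ?thesis using qint3_ne by (auto intro: Nsp_unscale)
qed

lemma w4N: "bt [(0,2),(0,2)] \<in> Nsp"
proof -
  have "lin_ext (F2 1) w3n \<in> Nsp" by (rule N_f) (auto intro: w3N)
  moreover have "lin_ext (F2 1) w3n = tscale (qint 2 * (qq ^ 2 + inverse (qq ^ 2))) (bt [(0,2),(0,2)])"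
    unfolding w3n_def by (simp add: calc_simps) (rule ext, auto simp: tens_simps bt_def field_simps; algebra)
  ultimately show ?thesis using c4_ne by (auto intro: Nsp_unscale)
qed

definition ao2 :: tens where
  "ao2 = tadd (bt [(1,1),(0,0)]) (tscale (qq ^ 2) (bt [(0,0),(1,1)]))"

lemma ao2N: "ao2 \<in> Nsp"
proof -
  have "lin_ext (E2 0) (bt [(0,0),(0,0)]) \<in> Nsp" by (rule N_e) (auto intro: w0N)
  moreover have "lin_ext (E2 0) (bt [(0,0),(0,0)]) = ao2"
    unfolding ao2_def by (simp add: calc_simps) (rule ext, auto simp: tens_simps bt_def field_simps; algebra)
  ultimately show ?thesis by simp
qed

definition ao3 :: tens where
  "ao3 = tadd (bt [(2,2),(0,0)]) (tadd (tscale qq (bt [(1,1),(1,1)])) (tscale (qq ^ 4) (bt [(0,0),(2,2)])))"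

lemma ao3N: "ao3 \<in> Nsp"
proof -
  have "lin_ext (E2 0) ao2 \<in> Nsp" by (rule N_e) (auto intro: ao2N)
  moreover have "lin_ext (E2 0) ao2 = tscale (qint 2) ao3"
    unfolding ao2_def ao3_def by (simp add: calc_simps) (rule ext, auto simp: tens_simps bt_def field_simps; algebra)
  ultimately show ?thesis using qint2_ne by (auto intro: Nsp_unscale)
qed

definition b3 :: tens where
  "b3 = tadd (tadd (bt [(1,1),(0,1)]) (tscale (qq ^ 2) (bt [(0,1),(1,1)])))
     (tscale (qq + qq ^ 3) (tadd (bt [(0,0),(1,2)]) (bt [(1,2),(0,0)])))"

lemma b3N: "b3 \<in> Nsp"
proof -
  have "lin_ext (F2 1) ao2 \<in> Nsp" by (rule N_f) (auto intro: ao2N)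
  moreover have "lin_ext (F2 1) ao2 = b3"
    unfolding ao2_def b3_def by (simp add: calc_simps) (rule ext, auto simp: tens_simps bt_def field_simps; algebra)
  ultimately show ?thesis by simp
qed

definition b2 :: tens where
  "b2 = tadd (bt [(1,2),(0,1)]) (tscale (qq ^ 2) (bt [(0,1),(1,2)]))"

lemma b2N: "b2 \<in> Nsp"
proof -
  have "lin_ext (E2 0) w2n \<in> Nsp" by (rule N_e) (auto intro: w2N)
  moreover have "lin_ext zsum2 w3n \<in> Nsp" by (rule N_zsum) (rule w3N)
  ultimately have "tsub (lin_ext (E2 0) w2n) (lin_ext zsum2 w3n) \<in> Nsp"
    unfolding tsub_as_tadd by (intro N_add N_scale)
  moreover have "tsub (lin_ext (E2 0) w2n) (lin_ext zsum2 w3n) = b2"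
    unfolding w2n_def w3n_def b2_def by (simp add: calc_simps) (rule ext, auto simp: tens_simps bt_def field_simps; algebra)
  ultimately show ?thesis by simp
qed

definition ae1 :: tens where
  "ae1 = tadd (bt [(1,0),(1,2)]) (tadd (tscale qq (bt [(1,1),(1,1)])) (tscale (qq ^ 4) (bt [(1,2),(1,0)])))"

lemma ae1N: "ae1 \<in> Nsp"
proof -
  have "lin_ext (zz2 1) w2n \<in> Nsp" by (rule N_z) (rule w2N)
  moreover have "lin_ext (zz2 1) w2n = ae1"
    unfolding w2n_def ae1_def by (simp add: calc_simps)
  ultimately show ?thesis by simp
qed

definition ae2 :: tens where
  "ae2 = tadd (bt [(1,1),(1,2)]) (tscale (qq ^ 2) (bt [(1,2),(1,1)]))"

lemma ae2N: "ae2 \<in> Nsp"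
proof -
  have "lin_ext (zz2 1) w3n \<in> Nsp" by (rule N_z) (rule w3N)
  moreover have "lin_ext (zz2 1) w3n = ae2"
    unfolding w3n_def ae2_def by (simp add: calc_simps)
  ultimately show ?thesis by simp
qed

lemma ex1N: "bt [(1,2),(1,2)] \<in> Nsp"
proof -
  have "lin_ext (zz2 1) (bt [(0,2),(0,2)]) \<in> Nsp" by (rule N_z) (rule w4N)
  then show ?thesis by (simp add: calc_simps)
qed

definition ae3 :: tens where
  "ae3 = tadd (bt [(2,2),(1,2)]) (bt [(1,2),(2,2)])"

lemma ae3N: "ae3 \<in> Nsp"
proof -
  have "lin_ext zsum2 (bt [(1,2),(1,2)]) \<in> Nsp" by (rule N_zsum) (rule ex1N)
  then show ?thesis by (simp add: calc_simps ae3_def)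
qed

definition ao1 :: tens where
  "ao1 = tadd (bt [(1,0),(0,0)]) (bt [(0,0),(1,0)])"

lemma ao1N: "ao1 \<in> Nsp"
proof -
  have "lin_ext zsum2 (bt [(0,0),(0,0)]) \<in> Nsp" by (rule N_zsum) (rule w0N)
  then show ?thesis by (simp add: calc_simps ao1_def)
qed

definition Yg :: "gseq \<Rightarrow> int \<Rightarrow> bas \<Rightarrow> bool" where
  "Yg g s y = (case g of GS_B \<Rightarrow> fst y \<ge> int (min (snd y) 1)
      | GS_A \<Rightarrow> (if even s then fst y \<ge> 1 else fst y \<ge> int (snd y)))"

definition rk :: "bas \<Rightarrow> int" where "rk y = 3 * fst y + 2 - int (snd y)"

definition LP :: "gseq \<Rightarrow> int \<Rightarrow> bas \<Rightarrow> bas \<Rightarrow> bool" where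
  "LP g s y = (\<lambda>y'. snd y' \<le> 2 \<and> Yg g (s + 1) y' \<and> rk y' < rk y)"

definition cf :: "gseq \<Rightarrow> int \<Rightarrow> nat \<Rightarrow> K" where
  "cf g s i = (case g of GS_B \<Rightarrow> - (qq ^ 2)
      | GS_A \<Rightarrow> (if even s then - (qq ^ (4 - 2 * i)) else - (qq ^ (2 * i))))"

lemma cf_A[simp]: "cf g s i \<in> Areg" by (cases g) (auto simp: cf_def)

lemma Yg_mono: "Yg g s y \<Longrightarrow> Yg g s (zsh y)"
  by (cases g) (auto simp: Yg_def zsh_def)

lemma Step_up:
  assumes st: "Step g s (a, i) c (LP g s (a, i))" and c: "c \<in> Areg" and i: "i \<le> 2"
    and Y: "Yg g (s + 1) (a, i)" and Yv: "Yg g (s + 1) (zsh (bcirc g s))"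
    and rv: "rk (zsh (bcirc g s)) < rk (a + 1, i)"
  shows "Step g s (a + 1, i) c (LP g s (a + 1, i))"
proof -
  have "Step g s (zsh (a, i)) c (LP g s (a + 1, i))"
  proof (rule Step_Z[OF st c])
    show "snd (a, i) \<le> 2" using i by simp
    show "LP g s (a + 1, i) (a, i)" using i Y by (simp add: LP_def rk_def)
    show "LP g s (a + 1, i) (zsh (bcirc g s))" using Yv rv by (simp add: LP_def zsh_def)
    show "LP g s (a + 1, i) y' \<and> LP g s (a + 1, i) (zsh y')" if "LP g s (a, i) y'" for y'
      using that Yg_mono[of g "s + 1" y'] by (auto simp: LP_def rk_def zsh_def)
  qed
  then show ?thesis by (simp add: zsh_def)
qed

lemma bcB[simp]: "bcirc GS_B s = (0, 1)" by (simp add: bcirc_def)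
lemma bcAe[simp]: "even s \<Longrightarrow> bcirc GS_A s = (1, 2)" by (simp add: bcirc_def)
lemma bcAo[simp]: "odd s \<Longrightarrow> bcirc GS_A s = (0, 0)" by (simp add: bcirc_def)

lemma StepI0: "tsub (tsub (bt [y, bcirc g s]) (tscale c (bt [bcirc g s, y]))) tzero \<in> Nsp \<Longrightarrow> Step g s y c P"
  unfolding Step_def by (rule bexI[of _ tzero]) auto

lemma StepI1: "tsub (tsub (bt [y, bcirc g s]) (tscale c (bt [bcirc g s, y]))) (tscale d (bt [x, y'])) \<in> Nsp
   \<Longrightarrow> d \<in> Areg \<Longrightarrow> snd x \<le> 2 \<Longrightarrow> P y' \<Longrightarrow> Step g s y c P"
  unfolding Step_def by (rule bexI[of _ "tscale d (bt [x, y'])"]) (auto intro: Lower_scale Lower_base)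

lemma StepB:
  fixes n :: nat
  shows "i \<le> 2 \<Longrightarrow> int (min i 1) \<le> int n \<Longrightarrow> Step GS_B s (int n, i) (cf GS_B s i) (LP GS_B s (int n, i))"
proof (induction n)
  case 0
  then have "i = 0" by auto
  have "w1 \<in> Nsp" by (rule w1N)
  moreover have "w1 = tsub (tsub (bt [(0, 0), bcirc GS_B s]) (tscale (cf GS_B s 0) (bt [bcirc GS_B s, (0, 0)]))) tzero"
    unfolding w1_def cf_def by (rule ext) (simp add: tens_simps)
  ultimately show ?case using \<open>i = 0\<close> by (auto intro: StepI0)
next
  case (Suc n)
  show ?case
  proof (cases "i \<noteq> 0 \<and> n = 0")
    case True
    then have "i = 1 \<or> i = 2" using Suc.prems by auto
    then show ?thesis
    proof
      assume i: "i = 1"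
      let ?l = "tscale (- (qq + qq ^ 3)) (tadd (bt [(0,0),(1,2)]) (bt [(1,2),(0,0)]))"
      have l: "?l \<in> Lower (LP GS_B s (1, 1))"
        by (intro Lower_scale Lower_add Lower_base) (auto simp: LP_def Yg_def rk_def)
      have "b3 = tsub (tsub (bt [(1, 1), bcirc GS_B s]) (tscale (cf GS_B s 1) (bt [bcirc GS_B s, (1, 1)]))) ?l"
        unfolding b3_def cf_def by (rule ext) (simp add: tens_simps algebra_simps)
      then show ?thesis using b3N l True i unfolding Step_def by (auto intro!: bexI[of _ ?l])
    next
      assume i: "i = 2"
      have "b2 = tsub (tsub (bt [(1, 2), bcirc GS_B s]) (tscale (cf GS_B s 2) (bt [bcirc GS_B s, (1, 2)]))) tzero"
        unfolding b2_def cf_def by (rule ext) (simp add: tens_simps)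
      then show ?thesis using b2N True i by (auto intro: StepI0)
    qed
  next
    case False
    then have IHp: "int (min i 1) \<le> int n" using Suc.prems by auto
    have "Step GS_B s (int n + 1, i) (cf GS_B s i) (LP GS_B s (int n + 1, i))"
      by (rule Step_up[OF Suc.IH[OF Suc.prems(1) IHp]])
         (use Suc.prems IHp False in \<open>auto simp: Yg_def rk_def zsh_def\<close>)
    then show ?thesis by (simp add: add.commute)
  qed
qed

lemma StepAe:
  fixes n :: nat
  shows "even s \<Longrightarrow> i \<le> 2 \<Longrightarrow> 1 \<le> n \<Longrightarrow> i \<le> n \<Longrightarrow> Step GS_A s (int n, i) (cf GS_A s i) (LP GS_A s (int n, i))"
proof (induction n)
  case 0 then show ?case by simp
next
  case (Suc n)
  show ?case
  proof (cases "(n = 0 \<and> i \<le> 1) \<or> (n = 1 \<and> i = 2)")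
    case True
    then consider "n = 0" "i = 0" | "n = 0" "i = 1" | "n = 1" "i = 2" by linarith
    then show ?thesis
    proof cases
      case 1
      let ?l = "tscale (- qq) (bt [(1,1),(1,1)])"
      have "ae1 = tsub (tsub (bt [(1, 0), bcirc GS_A s]) (tscale (cf GS_A s 0) (bt [bcirc GS_A s, (1, 0)]))) ?l"
        unfolding ae1_def cf_def using Suc.prems by (rule_tac ext) (simp add: tens_simps algebra_simps)
      moreover have "LP GS_A s (1, 0) (1, 1)" using Suc.prems by (simp add: LP_def Yg_def rk_def)
      ultimately show ?thesis using ae1N 1 by (intro StepI1[where d = "- qq" and x = "(1,1)" and y' = "(1,1)"]) auto
    next
      case 2
      have "ae2 = tsub (tsub (bt [(1, 1), bcirc GS_A s]) (tscale (cf GS_A s 1) (bt [bcirc GS_A s, (1, 1)]))) tzero"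
        unfolding ae2_def cf_def using Suc.prems by (rule_tac ext) (simp add: tens_simps)
      then show ?thesis using ae2N 2 by (auto intro: StepI0)
    next
      case 3
      have "ae3 = tsub (tsub (bt [(2, 2), bcirc GS_A s]) (tscale (cf GS_A s 2) (bt [bcirc GS_A s, (2, 2)]))) tzero"
        unfolding ae3_def cf_def using Suc.prems by (rule_tac ext) (simp add: tens_simps)
      then show ?thesis using ae3N 3 by (auto intro: StepI0)
    qed
  next
    case False
    then have IHp: "1 \<le> n" "i \<le> n" using Suc.prems by auto
    have "Step GS_A s (int n + 1, i) (cf GS_A s i) (LP GS_A s (int n + 1, i))"
      by (rule Step_up[OF Suc.IH[OF Suc.prems(1,2) IHp]])
         (use Suc.prems IHp False in \<open>auto simp: Yg_def rk_def zsh_def\<close>)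
    then show ?thesis by (simp add: add.commute)
  qed
qed

lemma StepAo:
  fixes n :: nat
  shows "odd s \<Longrightarrow> i \<le> 2 \<Longrightarrow> 1 \<le> n \<Longrightarrow> i \<le> n \<Longrightarrow> Step GS_A s (int n, i) (cf GS_A s i) (LP GS_A s (int n, i))"
proof (induction n)
  case 0 then show ?case by simp
next
  case (Suc n)
  show ?case
  proof (cases "(n = 0 \<and> i \<le> 1) \<or> (n = 1 \<and> i = 2)")
    case True
    then consider "n = 0" "i = 0" | "n = 0" "i = 1" | "n = 1" "i = 2" by linarith
    then show ?thesis
    proof cases
      case 1
      have "ao1 = tsub (tsub (bt [(1, 0), bcirc GS_A s]) (tscale (cf GS_A s 0) (bt [bcirc GS_A s, (1, 0)]))) tzero"
        unfolding ao1_def cf_def using Suc.prems by (rule_tac ext) (simp add: tens_simps)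
      then show ?thesis using ao1N 1 by (auto intro: StepI0)
    next
      case 2
      have "ao2 = tsub (tsub (bt [(1, 1), bcirc GS_A s]) (tscale (cf GS_A s 1) (bt [bcirc GS_A s, (1, 1)]))) tzero"
        unfolding ao2_def cf_def using Suc.prems by (rule_tac ext) (simp add: tens_simps)
      then show ?thesis using ao2N 2 by (auto intro: StepI0)
    next
      case 3
      let ?l = "tscale (- qq) (bt [(1,1),(1,1)])"
      have "ao3 = tsub (tsub (bt [(2, 2), bcirc GS_A s]) (tscale (cf GS_A s 2) (bt [bcirc GS_A s, (2, 2)]))) ?l"
        unfolding ao3_def cf_def using Suc.prems by (rule_tac ext) (simp add: tens_simps algebra_simps)
      moreover have "LP GS_A s (2, 2) (1, 1)" using Suc.prems by (simp add: LP_def Yg_def rk_def)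
      ultimately show ?thesis using ao3N 3 by (intro StepI1[where d = "- qq" and x = "(1,1)" and y' = "(1,1)"]) auto
    qed
  next
    case False
    then have IHp: "1 \<le> n" "i \<le> n" using Suc.prems by auto
    have "Step GS_A s (int n + 1, i) (cf GS_A s i) (LP GS_A s (int n + 1, i))"
      by (rule Step_up[OF Suc.IH[OF Suc.prems(1,2) IHp]])
         (use Suc.prems IHp False in \<open>auto simp: Yg_def rk_def zsh_def\<close>)
    then show ?thesis by (simp add: add.commute)
  qed
qed

lemma cf_prod: "i \<le> 2 \<Longrightarrow> cf g s i * cf g (s + 1) i = qq ^ 4"
  by (cases g) (auto simp: cf_def power_add[symmetric])

lemma rk_nonneg: "snd y \<le> 2 \<Longrightarrow> Yg g s y \<Longrightarrow> 0 \<le> rk y"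
  by (cases g) (auto simp: Yg_def rk_def split: if_splits)

lemma sm_direct:
  assumes "bt [y, bcirc g s] \<in> Nsp"
  shows "sm g s 1 (bt [y])"
proof -
  have "sm g (s + 1) 2 (bt [y, bcirc g s])" by (rule sm_Nn[OF Nsp_Nn2[OF assms]])
  moreover have t: "Suc 1 = (2::nat)" by simp
  ultimately have "sm g (s + 1) (Suc 1) (tappend (bt [y]) (bcirc g s))" by (simp only: tappend_bt t append.simps)
  then show ?thesis by (rule sm_shift1)
qed

lemma main_sm: "\<forall>y s. nat (rk y) = N \<longrightarrow> snd y \<le> 2 \<longrightarrow> Yg g s y \<longrightarrow> sm g s 1 (bt [y])"
proof (induction N rule: less_induct)
  case (less N)
  show ?case
  proof (intro allI impI)
    fix y s assume h: "nat (rk y) = N" "snd y \<le> 2" "Yg g s y"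
    obtain a i where y: "y = (a, i)" by (cases y)
    have IH: "sm g (s' + 1) 1 (bt [y'])" if "LP g s' y y'" for s' y'
    proof -
      have "0 \<le> rk y'" using that rk_nonneg[of y' g "s' + 1"] by (auto simp: LP_def)
      then have lt: "nat (rk y') < N" using that h(1) by (auto simp: LP_def)
      have "\<forall>y s. nat (rk y) = nat (rk y') \<longrightarrow> snd y \<le> 2 \<longrightarrow> Yg g s y \<longrightarrow> sm g s 1 (bt [y])"
        by (rule less.IH[OF lt])
      then show ?thesis using that unfolding LP_def by blast
    qed
    have tel: "sm g s 1 (bt [y])" if st: "\<And>s'. Step g s' y (cf g s' i) (LP g s' y)"
    proof (rule telescope[where cf = "\<lambda>s'. cf g s' i"])
      show "sm g (s' + 1) 2 (tsub (bt [y, bcirc g s']) (tscale (cf g s' i) (bt [bcirc g s', y])))" for s'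
        by (rule Step_sm[OF st]) (rule IH)
      show "cf g s' i \<in> Areg" for s' by simp
      show "cf g s' i * cf g (s' + 1) i = qq ^ 4" for s' using h(2) y by (simp add: cf_prod)
      show "snd y \<le> 2" by (rule h(2))
    qed
    show "sm g s 1 (bt [y])"
    proof (cases g)
      case GS_B
      then have "0 \<le> a" "int (min i 1) \<le> a" "i \<le> 2" using h y by (auto simp: Yg_def)
      then obtain n where n: "a = int n" "int (min i 1) \<le> int n" by (metis nonneg_int_cases)
      show ?thesis
        by (rule tel) (use StepB[of i n] n y \<open>i \<le> 2\<close> GS_B in auto)
    next
      case GS_A
      show ?thesis
      proof (cases "(even s \<and> y = (1, 2)) \<or> (odd s \<and> y = (0, 0))")
        case True
        show ?thesis
        proof (rule sm_direct)
          show "bt [y, bcirc g s] \<in> Nsp" using True GS_A ex1N w0N by auto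
        qed
      next
        case False
        then have "1 \<le> a" "int i \<le> a" "i \<le> 2" using h y GS_A
          by (auto simp: Yg_def split: if_splits)
        then obtain n where n: "a = int n" "1 \<le> n" "i \<le> n"
          by (metis nonneg_int_cases of_nat_le_iff of_nat_1 order_trans zero_le_one)
        have "Step g s' y (cf g s' i) (LP g s' y)" for s'
        proof (cases "even s'")
          case True then show ?thesis using StepAe[of s' i n] n y \<open>i \<le> 2\<close> GS_A by auto
        next
          case False then show ?thesis using StepAo[of s' i n] n y \<open>i \<le> 2\<close> GS_A by auto
        qed
        then show ?thesis by (rule tel)
      qed
    qed
  qed
qed

lemma energy_Yg: "snd b \<le> 2 \<Longrightarrow> energy b (bcirc g m) \<le> 0 \<Longrightarrow> Yg g m b"
  by (cases g; cases b) (auto simp: energy_def bcirc_def Yg_def split: if_splits)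

theorem mainTheorem6:
  fixes g :: gseq and m :: int and b :: bas
  assumes "snd b \<le> 2"
    and "energy b (bcirc g m) \<le> 0"
  shows "\<forall>n::nat. n > 0 \<longrightarrow> in_qL_Fbar g (m - 1) n 1 (bt [b])"
proof (intro allI impI)
  fix n :: nat
  have "sm g m 1 (bt [b])"
    using main_sm[where g = g and N = "nat (rk b)"] assms energy_Yg by blast
  then obtain k w where kw: "w \<in> Ltens (1 + k)" "tsub (pushk g m k (bt [b])) (tscale (qq ^ n) w) \<in> Nn (1 + k)"
    unfolding sm_def by blast
  have e1: "push g (m - 1) 1 (1 + k - 1) (bt [b]) = pushk g m k (bt [b])"
    by (simp add: push_pushk)
  have e2: "foldr tadd (map (\<lambda>(ri, ui, ci). tscale ci (push g (m - 1) ri (1 + k - ri) ui)) [(1 + k, w, 1)]) tzero = w"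
    by (rule ext) (simp add: tens_simps)
  show "in_qL_Fbar g (m - 1) n 1 (bt [b])"
    unfolding in_qL_Fbar_def
  proof (rule exI[of _ "1 + k"], rule exI[of _ "[(1 + k, w, 1)]"], intro conjI)
    show "1 \<le> 1 + k" by simp
    show "\<forall>(ri, ui, ci)\<in>set [(1 + k, w, 1)]. ri \<le> 1 + k \<and> ui \<in> Ltens ri \<and> ci \<in> Areg"
      using kw(1) by simp
    show "tsub (push g (m - 1) 1 (1 + k - 1) (bt [b]))
      (tscale (qq ^ n) (foldr tadd (map (\<lambda>(ri, ui, ci). tscale ci (push g (m - 1) ri (1 + k - ri) ui)) [(1 + k, w, 1)]) tzero))
      \<in> Nn (1 + k)"
      unfolding e1 e2 by (rule kw(2))
  qed
qed

end
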